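(* Let $t\in\mathbb{R}^K$ be fixed and let $\Lambda\subseteq\mathbb{R}^K\setminus\{0\}$ be an arbitrary (possibly infinite) set. For $\lambda\in\Lambda$ and $\varrho\in\mathbb{R}^N$ define $$f(\lambda,\varrho)=\frac{\max\left[0,\ \lambda^T\{t-\mu(\varrho)\}\right]^2}{\lambda^T\Sigma(\varrho)\lambda},\qquad g(\varrho)=\sup_{\lambda\in\Lambda}f(\lambda,\varrho).$$ Then $g$ is a convex function of $\varrho$ on the convex set $\mathcal{C}=\{\varrho\in\mathbb{R}^N:\Sigma(\varrho)\text{ is positive definite}\}$ (on which $g$ is finite).
   Context: There are $I$ strata; stratum $i$ contains $n_i\ge 2$ units, indexed $(i,j)$, $j=1,\dots,n_i$, and $N=\sum_{i=1}^I n_i$. Vectors in $\mathbb{R}^N$ are indexed lexicographically by $(i,j)$. There are $K$ outcomes, and for each unit $(i,j)$ and outcome $k$ there is a fixed real constant $q_{ijk}$. For $\varrho=(\varrho_{ij})\in\mathbb{R}^N$ define $\mu(\varrho)\in\mathbb{R}^K$ and the $K\times K$ matrix $\Sigma(\varrho)$ by $$\mu(\varrho)_k=\sum_{i=1}^I\sum_{j=1}^{n_i}q_{ijk}\varrho_{ij},\qquad \Sigma(\varrho)_{k\ell}=\sum_{i=1}^I\Big\{\sum_{j=1}^{n_i}q_{ijk}q_{ij\ell}\varrho_{ij}-\Big(\sum_{j=1}^{n_i}q_{ijk}\varrho_{ij}\Big)\Big(\sum_{j=1}^{n_i}q_{ij\ell}\varrho_{ij}\Big)\Big\}.$$ *)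

theory Defs
  imports "HOL-Analysis.Analysis"
begin

text \<open>Strata i < I, units j < n i of stratum i, outcomes indexed by the finite type 'k
  (so K = CARD('k)). A vector rho in R^N is a function rho i j (only i < I, j < n i matter).\<close>

definition mu :: "nat \<Rightarrow> (nat \<Rightarrow> nat) \<Rightarrow> (nat \<Rightarrow> nat \<Rightarrow> 'k \<Rightarrow> real)
    \<Rightarrow> (nat \<Rightarrow> nat \<Rightarrow> real) \<Rightarrow> real ^ 'k::finite" where
  "mu I n q rho = (\<chi> k. \<Sum>i<I. \<Sum>j<n i. q i j k * rho i j)"

definition Sigma_mat :: "nat \<Rightarrow> (nat \<Rightarrow> nat) \<Rightarrow> (nat \<Rightarrow> nat \<Rightarrow> 'k \<Rightarrow> real)
    \<Rightarrow> (nat \<Rightarrow> nat \<Rightarrow> real) \<Rightarrow> real ^ 'k ^ 'k::finite" where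
  "Sigma_mat I n q rho = (\<chi> k l. \<Sum>i<I.
      ((\<Sum>j<n i. q i j k * q i j l * rho i j)
       - (\<Sum>j<n i. q i j k * rho i j) * (\<Sum>j<n i. q i j l * rho i j)))"

definition pos_def_mat :: "real ^ 'k ^ 'k::finite \<Rightarrow> bool" where
  "pos_def_mat A \<longleftrightarrow> (\<forall>x. x \<noteq> 0 \<longrightarrow> x \<bullet> (A *v x) > 0)"

definition f_fun :: "nat \<Rightarrow> (nat \<Rightarrow> nat) \<Rightarrow> (nat \<Rightarrow> nat \<Rightarrow> 'k \<Rightarrow> real) \<Rightarrow> real ^ 'k
    \<Rightarrow> real ^ 'k::finite \<Rightarrow> (nat \<Rightarrow> nat \<Rightarrow> real) \<Rightarrow> real" where
  "f_fun I n q t lam rho =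
     (max 0 (lam \<bullet> (t - mu I n q rho)))\<^sup>2 / (lam \<bullet> (Sigma_mat I n q rho *v lam))"

definition g_fun :: "nat \<Rightarrow> (nat \<Rightarrow> nat) \<Rightarrow> (nat \<Rightarrow> nat \<Rightarrow> 'k \<Rightarrow> real) \<Rightarrow> real ^ 'k
    \<Rightarrow> (real ^ 'k::finite) set \<Rightarrow> (nat \<Rightarrow> nat \<Rightarrow> real) \<Rightarrow> real" where
  "g_fun I n q t Lam rho = (SUP lam\<in>Lam. f_fun I n q t lam rho)"

definition C_set :: "nat \<Rightarrow> (nat \<Rightarrow> nat) \<Rightarrow> (nat \<Rightarrow> nat \<Rightarrow> 'k::finite \<Rightarrow> real)
    \<Rightarrow> (nat \<Rightarrow> nat \<Rightarrow> real) set" where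
  "C_set I n q = {rho. pos_def_mat (Sigma_mat I n q rho)}"

end

theory Submission
  imports Defs
begin

definition aa :: "real ^ 'k::finite \<Rightarrow> (nat \<Rightarrow> nat \<Rightarrow> 'k \<Rightarrow> real) \<Rightarrow> nat \<Rightarrow> nat \<Rightarrow> real" where
  "aa x q i j = (\<Sum>k\<in>UNIV. x$k * q i j k)"

lemma quad_eq:
  "x \<bullet> (Sigma_mat I n q rho *v x) =
     (\<Sum>i<I. (\<Sum>j<n i. (aa x q i j)\<^sup>2 * rho i j) - (\<Sum>j<n i. aa x q i j * rho i j)\<^sup>2)"
proof -
  have "x \<bullet> (Sigma_mat I n q rho *v x) = (\<Sum>k\<in>UNIV. \<Sum>l\<in>UNIV. x$k * x$l *
      (\<Sum>i<I. ((\<Sum>j<n i. q i j k * q i j l * rho i j)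
       - (\<Sum>j<n i. q i j k * rho i j) * (\<Sum>j<n i. q i j l * rho i j))))"
    by (simp add: inner_vec_def matrix_vector_mult_def Sigma_mat_def sum_distrib_left mult_ac)
  also have "\<dots> = (\<Sum>i<I. (\<Sum>k\<in>UNIV. \<Sum>l\<in>UNIV. \<Sum>j<n i. x$k * x$l * q i j k * q i j l * rho i j)
       - (\<Sum>k\<in>UNIV. \<Sum>l\<in>UNIV. (x$k * (\<Sum>j<n i. q i j k * rho i j)) * (x$l * (\<Sum>j<n i. q i j l * rho i j))))"
    by (simp add: sum_distrib_left sum_subtractf right_diff_distrib mult_ac sum.swap[of _ UNIV "{..<I}"])
  also have "\<dots> = (\<Sum>i<I. (\<Sum>j<n i. (aa x q i j)\<^sup>2 * rho i j) - (\<Sum>j<n i. aa x q i j * rho i j)\<^sup>2)"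
  proof (rule sum.cong[OF refl])
    fix i
    have 1: "(\<Sum>k\<in>UNIV. \<Sum>l\<in>UNIV. \<Sum>j<n i. x$k * x$l * q i j k * q i j l * rho i j)
        = (\<Sum>j<n i. (aa x q i j)\<^sup>2 * rho i j)"
      by (simp add: aa_def power2_eq_square sum_distrib_left sum_distrib_right mult_ac
          sum.swap[of _ UNIV "{..<n i}"])
    have 2: "(\<Sum>k\<in>UNIV. \<Sum>l\<in>UNIV. (x$k * (\<Sum>j<n i. q i j k * rho i j)) * (x$l * (\<Sum>j<n i. q i j l * rho i j)))
        = (\<Sum>j<n i. aa x q i j * rho i j)\<^sup>2"
    proof -
      have "(\<Sum>j<n i. aa x q i j * rho i j) = (\<Sum>k\<in>UNIV. x$k * (\<Sum>j<n i. q i j k * rho i j))"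
        by (simp add: aa_def sum_distrib_left sum_distrib_right mult_ac sum.swap[of _ UNIV "{..<n i}"])
      then show ?thesis by (simp add: power2_eq_square sum_product)
    qed
    show "(\<Sum>k\<in>UNIV. \<Sum>l\<in>UNIV. \<Sum>j<n i. x$k * x$l * q i j k * q i j l * rho i j)
       - (\<Sum>k\<in>UNIV. \<Sum>l\<in>UNIV. (x$k * (\<Sum>j<n i. q i j k * rho i j)) * (x$l * (\<Sum>j<n i. q i j l * rho i j)))
       = (\<Sum>j<n i. (aa x q i j)\<^sup>2 * rho i j) - (\<Sum>j<n i. aa x q i j * rho i j)\<^sup>2"
      using 1 2 by simp
  qed
  finally show ?thesis .
qed

lemma lin_eq:
  "x \<bullet> (t - mu I n q rho) = x \<bullet> t - (\<Sum>i<I. \<Sum>j<n i. aa x q i j * rho i j)"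
  by (simp add: inner_diff_right inner_vec_def mu_def aa_def sum_distrib_left sum_distrib_right right_diff_distrib sum_subtractf
      mult_ac sum.swap[of _ UNIV "{..<I}"] sum.swap[of _ UNIV "{..<n _}"])


lemma sum_lin2:
  fixes u v :: real
  shows "(\<Sum>j\<in>A. c j * (u * r1 j + v * r2 j)) = u * (\<Sum>j\<in>A. c j * r1 j) + v * (\<Sum>j\<in>A. c j * r2 j)"
proof -
  have "(\<Sum>j\<in>A. c j * (u * r1 j + v * r2 j)) = (\<Sum>j\<in>A. u * (c j * r1 j) + v * (c j * r2 j))"
    by (rule sum.cong) (simp_all add: distrib_left mult.left_commute)
  then show ?thesis by (simp only: sum.distrib sum_distrib_left)
qed

lemma quad_concave:
  fixes u :: real
  assumes "0 \<le> u" "u \<le> 1"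
  shows "u * (x \<bullet> (Sigma_mat I n q r1 *v x)) + (1 - u) * (x \<bullet> (Sigma_mat I n q r2 *v x))
     \<le> x \<bullet> (Sigma_mat I n q (\<lambda>i j. u * r1 i j + (1 - u) * r2 i j) *v x)"
proof -
  have per: "u * ((\<Sum>j<n i. (aa x q i j)\<^sup>2 * r1 i j) - (\<Sum>j<n i. aa x q i j * r1 i j)\<^sup>2)
      + (1 - u) * ((\<Sum>j<n i. (aa x q i j)\<^sup>2 * r2 i j) - (\<Sum>j<n i. aa x q i j * r2 i j)\<^sup>2)
    \<le> (\<Sum>j<n i. (aa x q i j)\<^sup>2 * (u * r1 i j + (1 - u) * r2 i j))
       - (\<Sum>j<n i. aa x q i j * (u * r1 i j + (1 - u) * r2 i j))\<^sup>2" for i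
  proof -
    define M1 where "M1 = (\<Sum>j<n i. (aa x q i j)\<^sup>2 * r1 i j)"
    define M2 where "M2 = (\<Sum>j<n i. (aa x q i j)\<^sup>2 * r2 i j)"
    define L1 where "L1 = (\<Sum>j<n i. aa x q i j * r1 i j)"
    define L2 where "L2 = (\<Sum>j<n i. aa x q i j * r2 i j)"
    have eM: "(\<Sum>j<n i. (aa x q i j)\<^sup>2 * (u * r1 i j + (1 - u) * r2 i j)) = u * M1 + (1 - u) * M2"
      unfolding M1_def M2_def by (rule sum_lin2)
    have eL: "(\<Sum>j<n i. aa x q i j * (u * r1 i j + (1 - u) * r2 i j)) = u * L1 + (1 - u) * L2"
      unfolding L1_def L2_def by (rule sum_lin2)
    have id: "u * (M1 - L1\<^sup>2) + (1 - u) * (M2 - L2\<^sup>2) + u * (1 - u) * (L1 - L2)\<^sup>2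
        = (u * M1 + (1 - u) * M2) - (u * L1 + (1 - u) * L2)\<^sup>2"
      by (simp add: algebra_simps power2_eq_square)
    have "0 \<le> u * (1 - u) * (L1 - L2)\<^sup>2" using assms by simp
    then show ?thesis unfolding eM eL M1_def[symmetric] M2_def[symmetric] L1_def[symmetric] L2_def[symmetric]
      using id by linarith
  qed
  show ?thesis unfolding quad_eq
    by (simp add: sum_distrib_left sum.distrib[symmetric] sum_mono per del: sum.distrib)
qed

lemma joint_convex:
  fixes u p1 p2 s1 s2 :: real
  assumes "0 \<le> u" "u \<le> 1" "0 < s1" "0 < s2"
  shows "(u * p1 + (1 - u) * p2)\<^sup>2 / (u * s1 + (1 - u) * s2) \<le> u * p1\<^sup>2 / s1 + (1 - u) * p2\<^sup>2 / s2"
proof -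
  define v where "v = 1 - u"
  have v: "0 \<le> v" using assms by (simp add: v_def)
  define S where "S = u * s1 + v * s2"
  have S: "0 < S"
  proof (cases "u = 0")
    case True then show ?thesis using assms by (simp add: S_def v_def)
  next
    case False then have "0 < u * s1" using assms by simp
    moreover have "0 \<le> v * s2" using v assms by simp
    ultimately show ?thesis by (simp add: S_def)
  qed
  have key: "S * (u * p1\<^sup>2 / s1 + v * p2\<^sup>2 / s2) - (u * p1 + v * p2)\<^sup>2
      = u * v * (p1 * s2 - p2 * s1)\<^sup>2 / (s1 * s2)"
    using assms by (simp add: S_def field_simps power2_eq_square)
  have "0 \<le> u * v * (p1 * s2 - p2 * s1)\<^sup>2 / (s1 * s2)" using assms v by simp
  then have "(u * p1 + v * p2)\<^sup>2 \<le> S * (u * p1\<^sup>2 / s1 + v * p2\<^sup>2 / s2)" using key by linarith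
  then have "(u * p1 + v * p2)\<^sup>2 / S \<le> u * p1\<^sup>2 / s1 + v * p2\<^sup>2 / s2"
    using S by (simp add: pos_divide_le_eq mult.commute)
  then show ?thesis by (simp add: S_def v_def)
qed

lemma posdef_bound:
  fixes A :: "real ^ 'k ^ 'k::finite"
  assumes "pos_def_mat A"
  shows "\<exists>m>0. \<forall>x. m * (norm x)\<^sup>2 \<le> x \<bullet> (A *v x)"
proof -
  have cont: "continuous_on (sphere 0 1) (\<lambda>x::real^'k. x \<bullet> (A *v x))"
    by (rule continuous_on_inner[OF continuous_on_id matrix_vector_mult_linear_continuous_on])
  have ne: "sphere (0::real^'k) 1 \<noteq> {}"
  proof -
    have "axis (undefined::'k) (1::real) \<in> sphere 0 1" by (simp add: norm_axis_1)
    then show ?thesis by blast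
  qed
  obtain x0 where x0: "x0 \<in> sphere 0 1" and mn: "\<forall>y\<in>sphere 0 1. x0 \<bullet> (A *v x0) \<le> y \<bullet> (A *v y)"
    using continuous_attains_inf[OF compact_sphere ne cont] by blast
  have "x0 \<noteq> 0" using x0 by auto
  then have m: "0 < x0 \<bullet> (A *v x0)" using assms unfolding pos_def_mat_def by blast
  have "(x0 \<bullet> (A *v x0)) * (norm x)\<^sup>2 \<le> x \<bullet> (A *v x)" for x
  proof (cases "x = 0")
    case True then show ?thesis by simp
  next
    case False
    define y where "y = (1 / norm x) *\<^sub>R x"
    have y: "y \<in> sphere 0 1" using False by (simp add: y_def)
    have xy: "x = norm x *\<^sub>R y" using False by (simp add: y_def)
    have "x \<bullet> (A *v x) = (y \<bullet> (A *v y)) * (norm x)\<^sup>2"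
      by (subst (1 2) xy) (simp add: matrix_vector_mult_scaleR power2_eq_square mult_ac)
    moreover have "x0 \<bullet> (A *v x0) \<le> y \<bullet> (A *v y)" using mn y by blast
    then have "x0 \<bullet> (A *v x0) * (norm x)\<^sup>2 \<le> (y \<bullet> (A *v y)) * (norm x)\<^sup>2"
      by (rule mult_right_mono) simp
    ultimately show ?thesis by linarith
  qed
  then show ?thesis using m by blast
qed

lemma f_bound:
  assumes "rho \<in> C_set I n q"
  shows "\<exists>M. \<forall>lam. lam \<noteq> 0 \<longrightarrow> f_fun I n q t lam rho \<le> M"
proof -
  obtain m where m: "m > 0" "\<forall>x. m * (norm x)\<^sup>2 \<le> x \<bullet> (Sigma_mat I n q rho *v x)"
    using posdef_bound assms unfolding C_set_def by blast
  define w where "w = t - mu I n q rho"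
  have "f_fun I n q t lam rho \<le> (norm w)\<^sup>2 / m" if "lam \<noteq> 0" for lam
  proof -
    have nl: "0 < norm lam" using that by simp
    have "max 0 (lam \<bullet> w) \<le> norm lam * norm w"
      using norm_cauchy_schwarz[of lam w] by simp
    then have p: "(max 0 (lam \<bullet> w))\<^sup>2 \<le> (norm lam * norm w)\<^sup>2"
      by (intro power_mono) auto
    have d: "m * (norm lam)\<^sup>2 \<le> lam \<bullet> (Sigma_mat I n q rho *v lam)" using m by blast
    have pos: "0 < m * (norm lam)\<^sup>2" using m nl by simp
    have "f_fun I n q t lam rho \<le> (norm lam * norm w)\<^sup>2 / (m * (norm lam)\<^sup>2)"
      unfolding f_fun_def w_def[symmetric] by (rule frac_le[OF _ p pos d]) simp
    also have "\<dots> = (norm w)\<^sup>2 / m" using nl by (simp add: power_mult_distrib)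
    finally show ?thesis .
  qed
  then show ?thesis by blast
qed

lemma f_convex:
  fixes u :: real
  assumes r1: "r1 \<in> C_set I n q" and r2: "r2 \<in> C_set I n q" and lam: "lam \<noteq> 0"
    and u: "0 \<le> u" "u \<le> 1"
  shows "f_fun I n q t lam (\<lambda>i j. u * r1 i j + (1 - u) * r2 i j)
      \<le> u * f_fun I n q t lam r1 + (1 - u) * f_fun I n q t lam r2"
proof -
  define ru where "ru = (\<lambda>i j. u * r1 i j + (1 - u) * r2 i j)"
  define d1 where "d1 = lam \<bullet> (Sigma_mat I n q r1 *v lam)"
  define d2 where "d2 = lam \<bullet> (Sigma_mat I n q r2 *v lam)"
  define du where "du = lam \<bullet> (Sigma_mat I n q ru *v lam)"
  define l1 where "l1 = lam \<bullet> (t - mu I n q r1)"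
  define l2 where "l2 = lam \<bullet> (t - mu I n q r2)"
  define lu where "lu = lam \<bullet> (t - mu I n q ru)"
  have d1: "0 < d1" using r1 lam unfolding d1_def C_set_def pos_def_mat_def by blast
  have d2: "0 < d2" using r2 lam unfolding d2_def C_set_def pos_def_mat_def by blast
  have D: "u * d1 + (1 - u) * d2 \<le> du" unfolding d1_def d2_def du_def ru_def
    by (rule quad_concave[OF u])
  have Dpos: "0 < u * d1 + (1 - u) * d2"
  proof (cases "u = 0")
    case True then show ?thesis using d2 by simp
  next
    case False then have "0 < u * d1" using u d1 by simp
    moreover have "0 \<le> (1 - u) * d2" using u d2 by simp
    ultimately show ?thesis by simp
  qed
  have lu: "lu = u * l1 + (1 - u) * l2"
  proof -
    have "(\<Sum>i<I. \<Sum>j<n i. aa lam q i j * ru i j) = (\<Sum>i<I. u * (\<Sum>j<n i. aa lam q i j * r1 i j)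
        + (1 - u) * (\<Sum>j<n i. aa lam q i j * r2 i j))"
      unfolding ru_def by (rule sum.cong[OF refl]) (rule sum_lin2)
    also have "\<dots> = u * (\<Sum>i<I. \<Sum>j<n i. aa lam q i j * r1 i j) + (1 - u) * (\<Sum>i<I. \<Sum>j<n i. aa lam q i j * r2 i j)"
      by (simp only: sum.distrib sum_distrib_left)
    finally show ?thesis unfolding lu_def l1_def l2_def lin_eq by (simp add: algebra_simps)
  qed
  define P where "P = u * max 0 l1 + (1 - u) * max 0 l2"
  have P: "max 0 lu \<le> P" unfolding P_def lu using u
    by (smt (verit, ccfv_SIG) mult_left_mono mult_nonneg_nonneg)
  have pp: "(max 0 lu)\<^sup>2 \<le> P\<^sup>2" by (rule power_mono[OF P]) simp
  have "(max 0 lu)\<^sup>2 / du \<le> P\<^sup>2 / (u * d1 + (1 - u) * d2)"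
    by (rule frac_le[OF _ pp Dpos D]) simp
  also have "\<dots> \<le> u * (max 0 l1)\<^sup>2 / d1 + (1 - u) * (max 0 l2)\<^sup>2 / d2"
    unfolding P_def by (rule joint_convex[OF u d1 d2])
  finally show ?thesis
    unfolding f_fun_def ru_def[symmetric] lu_def[symmetric] du_def[symmetric] l1_def[symmetric]
      l2_def[symmetric] d1_def[symmetric] d2_def[symmetric] by simp
qed

theorem proposition1:
  fixes I :: nat and n :: "nat \<Rightarrow> nat" and q :: "nat \<Rightarrow> nat \<Rightarrow> 'k::finite \<Rightarrow> real"
    and t :: "real ^ 'k" and Lam :: "(real ^ 'k) set"
  assumes n_ge: "\<And>i. i < I \<Longrightarrow> n i \<ge> 2"
    and Lam_sub: "Lam \<subseteq> - {0}"
    and Lam_ne: "Lam \<noteq> {}"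
  shows "(\<forall>rho\<in>C_set I n q. bdd_above ((\<lambda>lam. f_fun I n q t lam rho) ` Lam))
    \<and> (\<forall>r1\<in>C_set I n q. \<forall>r2\<in>C_set I n q. \<forall>u::real. 0 \<le> u \<and> u \<le> 1 \<longrightarrow>
          (\<lambda>i j. u * r1 i j + (1 - u) * r2 i j) \<in> C_set I n q
        \<and> g_fun I n q t Lam (\<lambda>i j. u * r1 i j + (1 - u) * r2 i j)
            \<le> u * g_fun I n q t Lam r1 + (1 - u) * g_fun I n q t Lam r2)"
proof -
  have bdd: "bdd_above ((\<lambda>lam. f_fun I n q t lam rho) ` Lam)" if rC: "rho \<in> C_set I n q" for rho
  proof -
    obtain M where M: "\<forall>lam. lam \<noteq> 0 \<longrightarrow> f_fun I n q t lam rho \<le> M" using f_bound[OF rC] by blast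
    have "f_fun I n q t lam rho \<le> M" if lL: "lam \<in> Lam" for lam
    proof -
      have "lam \<noteq> 0" using lL Lam_sub by auto
      then show ?thesis using M by simp
    qed
    then show ?thesis by (rule bdd_aboveI2)
  qed
  have conv: "(\<lambda>i j. u * r1 i j + (1 - u) * r2 i j) \<in> C_set I n q
        \<and> g_fun I n q t Lam (\<lambda>i j. u * r1 i j + (1 - u) * r2 i j)
            \<le> u * g_fun I n q t Lam r1 + (1 - u) * g_fun I n q t Lam r2"
    if r1: "r1 \<in> C_set I n q" and r2: "r2 \<in> C_set I n q" and u: "0 \<le> u" "u \<le> 1" for r1 r2 u
  proof
    show C: "(\<lambda>i j. u * r1 i j + (1 - u) * r2 i j) \<in> C_set I n q"
      unfolding C_set_def pos_def_mat_def
    proof (intro CollectI allI impI)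
      fix x :: "real ^ 'k" assume x: "x \<noteq> 0"
      have a: "0 < x \<bullet> (Sigma_mat I n q r1 *v x)" using r1 x unfolding C_set_def pos_def_mat_def by blast
      have b: "0 < x \<bullet> (Sigma_mat I n q r2 *v x)" using r2 x unfolding C_set_def pos_def_mat_def by blast
      have "0 < u * (x \<bullet> (Sigma_mat I n q r1 *v x)) + (1 - u) * (x \<bullet> (Sigma_mat I n q r2 *v x))"
      proof (cases "u = 0")
        case True then show ?thesis using b by simp
      next
        case False then have "0 < u * (x \<bullet> (Sigma_mat I n q r1 *v x))" using u a by simp
        moreover have "0 \<le> (1 - u) * (x \<bullet> (Sigma_mat I n q r2 *v x))" using u b by simp
        ultimately show ?thesis by simp
      qed
      then show "0 < x \<bullet> (Sigma_mat I n q (\<lambda>i j. u * r1 i j + (1 - u) * r2 i j) *v x)"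
        using quad_concave[OF u, of x I n q r1 r2] by linarith
    qed
    show "g_fun I n q t Lam (\<lambda>i j. u * r1 i j + (1 - u) * r2 i j)
            \<le> u * g_fun I n q t Lam r1 + (1 - u) * g_fun I n q t Lam r2"
      unfolding g_fun_def
    proof (rule cSUP_least[OF Lam_ne])
      fix lam assume l: "lam \<in> Lam"
      then have l0: "lam \<noteq> 0" using Lam_sub by auto
      have "u * f_fun I n q t lam r1 \<le> u * (SUP lam\<in>Lam. f_fun I n q t lam r1)"
        using u by (intro mult_left_mono cSUP_upper[OF l bdd[OF r1]]) auto
      moreover have "(1 - u) * f_fun I n q t lam r2 \<le> (1 - u) * (SUP lam\<in>Lam. f_fun I n q t lam r2)"
        using u by (intro mult_left_mono cSUP_upper[OF l bdd[OF r2]]) auto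
      ultimately show "f_fun I n q t lam (\<lambda>i j. u * r1 i j + (1 - u) * r2 i j)
          \<le> u * (SUP lam\<in>Lam. f_fun I n q t lam r1) + (1 - u) * (SUP lam\<in>Lam. f_fun I n q t lam r2)"
        using f_convex[OF r1 r2 l0 u, of t] by linarith
    qed
  qed
  show ?thesis
  proof (rule conjI)
    show "\<forall>rho\<in>C_set I n q. bdd_above ((\<lambda>lam. f_fun I n q t lam rho) ` Lam)"
      using bdd by simp
  next
    show "\<forall>r1\<in>C_set I n q. \<forall>r2\<in>C_set I n q. \<forall>u::real. 0 \<le> u \<and> u \<le> 1 \<longrightarrow>
          (\<lambda>i j. u * r1 i j + (1 - u) * r2 i j) \<in> C_set I n q
        \<and> g_fun I n q t Lam (\<lambda>i j. u * r1 i j + (1 - u) * r2 i j)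
            \<le> u * g_fun I n q t Lam r1 + (1 - u) * g_fun I n q t Lam r2"
      using conv by simp
  qed
qed

end
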